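(* Fix a BS index $k\in\{1,\dots,K\}$ and a sample index $t\in\{1,\dots,T\}$, and fix an arbitrary expansion point consisting of real numbers $C_k^{(i)},\eta_{g_k,t}^{(i)}$ and matrices $\mathbf{V}_{g,t}^{(i)}\in\mathbb{C}^{M\times d}$, $g=1,\dots,G$. Let $f_{k,t}^{(i)}$ be the function defined in the context. Then: (1.1) For all real $C_k,\eta_{g_k,t}$ and all $\mathbf{V}_{1,t},\dots,\mathbf{V}_{G,t}\in\mathbb{C}^{M\times d}$, $$f_{k,t}^{(i)}\big(C_k,\eta_{g_k,t},\{\mathbf{V}_{g,t}\}_{g=1}^G\big)\ \ge\ (F_{g_k}-C_k)\,\eta_{g_k,t}-\log\det\big(\mathbf{I}_N+\mathbf{H}_{k,t}\mathbf{V}_{g_k,t}\mathbf{V}_{g_k,t}^H\mathbf{H}_{k,t}^H\mathbf{J}_{k,t}\big),$$ with equality when $C_k=C_k^{(i)}$, $\eta_{g_k,t}=\eta_{g_k,t}^{(i)}$ and $\mathbf{V}_{g,t}=\mathbf{V}_{g,t}^{(i)}$ for all $g$. (1.2) At the expansion point $\big(C_k^{(i)},\eta_{g_k,t}^{(i)},\{\mathbf{V}_{g,t}^{(i)}\}_{g=1}^G\big)$, the partial derivatives of $f_{k,t}^{(i)}$ and of the right-hand side function $(C_k,\eta_{g_k,t},\{\mathbf{V}_{g,t}\})\mapsto (F_{g_k}-C_k)\eta_{g_k,t}-\log\det\big(\mathbf{I}_N+\mathbf{H}_{k,t}\mathbf{V}_{g_k,t}\mathbf{V}_{g_k,t}^H\mathbf{H}_{k,t}^H\mathbf{J}_{k,t}\big)$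 coincide with respect to $C_k$, to $\eta_{g_k,t}$, and to the real part and the imaginary part of every entry of every $\mathbf{V}_{g,t}$, $g=1,\dots,G$. Moreover $f_{k,t}^{(i)}$ is a convex quadratic function of $(C_k,\eta_{g_k,t},\{\mathbf{V}_{g,t}\}_{g=1}^G)$.
   Context: Setting: there are $G$ clusters and $K$ base stations (BSs); BS $k$ belongs to cluster $g_k\in\{1,\dots,G\}$, and $\mathcal{K}_g$ denotes the set of BSs in cluster $g$. Integers $M>N\ge1$ are given and $d=N$. For each $k$ and sample $t\in\{1,\dots,T\}$, $\mathbf{H}_{k,t}\in\mathbb{C}^{N\times M}$ is a fixed matrix, $\sigma_k^2>0$ is a fixed noise power, and $F_g>0$ are fixed file sizes. Variables: $\mathbf{V}_{g,t}\in\mathbb{C}^{M\times d}$, real $C_k$, real $\eta_{g,t}$. Define $$\mathbf{J}_{k,t}=\Big(\sum_{g'\neq g_k}\mathbf{H}_{k,t}\mathbf{V}_{g',t}\mathbf{V}_{g',t}^H\mathbf{H}_{k,t}^H+\sigma_k^2\mathbf{I}_N\Big)^{-1}.$$ Given the expansion point $(C_k^{(i)},\eta_{g_k,t}^{(i)},\{\mathbf{V}_{g,t}^{(i)}\})$, define $$\mathbf{U}_{k,t}^{(i)}=\Big(\sum_{g=1}^G\mathbf{H}_{k,t}\mathbf{V}_{g,t}^{(i)}(\mathbf{V}_{g,t}^{(i)})^H\mathbf{H}_{k,t}^H+\sigma_k^2\mathbf{I}_N\Big)^{-1}\mathbf{H}_{k,t}\mathbf{V}_{g_k,t}^{(i)},\qquad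 \mathbf{Q}_{k,t}^{(i)}=\mathbf{I}_d-(\mathbf{U}_{k,t}^{(i)})^H\mathbf{H}_{k,t}\mathbf{V}_{g_k,t}^{(i)},$$ $$\mathbf{A}_{k,t}^{(i)}=\mathbf{H}_{k,t}^H\mathbf{U}_{k,t}^{(i)}(\mathbf{Q}_{k,t}^{(i)})^{-1}(\mathbf{U}_{k,t}^{(i)})^H\mathbf{H}_{k,t},\qquad \mathbf{B}_{k,t}^{(i)}=-(\mathbf{Q}_{k,t}^{(i)})^{-1}(\mathbf{U}_{k,t}^{(i)})^H\mathbf{H}_{k,t},$$ $$b_{k,t}^{(i)}=\mathrm{Tr}\Big((\mathbf{Q}_{k,t}^{(i)})^{-1}\big(\mathbf{I}_d+\sigma_k^2(\mathbf{U}_{k,t}^{(i)})^H\mathbf{U}_{k,t}^{(i)}\big)\Big)+\log\det\mathbf{Q}_{k,t}^{(i)}+\tfrac12\big(\eta_{g_k,t}^{(i)}+C_k^{(i)}\big)^2-d,$$ and $$f_{k,t}^{(i)}\big(C_k,\eta_{g_k,t},\{\mathbf{V}_{g,t}\}_{g=1}^G\big)=\sum_{g=1}^G\mathrm{Tr}\big(\mathbf{V}_{g,t}^H\mathbf{A}_{k,t}^{(i)}\mathbf{V}_{g,t}\big)+2\,\Re\{\mathrm{Tr}(\mathbf{B}_{k,t}^{(i)}\mathbf{V}_{g_k,t})\}+\frac{\eta_{g_k,t}^2+C_k^2}{2}+F_{g_k}\eta_{g_k,t}-\big(\eta_{g_k,t}^{(i)}+C_k^{(i)}\big)\big(\eta_{g_k,t}+C_k\big)+b_{k,t}^{(i)}.$$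 Here $\log$ is the natural logarithm. *)

theory Defs
  imports "HOL-Analysis.Analysis"
begin

text \<open>Complex matrices are rendered as complex^'c^'r (rows 'r, columns 'c).
 N (= d) is the cardinality of 'n, M that of 'm; clusters are the finite type 'g.
 A family {V_g} of M x d precoders is an element of complex^'n^'m^'g.\<close>

definition hconj :: "complex^'c^'r \<Rightarrow> complex^'r^'c" where
  "hconj A = (\<chi> i j. cnj (A $ j $ i))"

definition Jmat :: "complex^'m^'n \<Rightarrow> real \<Rightarrow> 'g::finite \<Rightarrow> complex^'n^'m^'g \<Rightarrow> complex^'n^'n" where
  "Jmat H s2 gk V = matrix_inv
     ((\<Sum>g\<in>UNIV - {gk}. H ** (V $ g) ** hconj (V $ g) ** hconj H) + mat (complex_of_real s2))"

definition Umat :: "complex^'m^'n \<Rightarrow> real \<Rightarrow> 'g::finite \<Rightarrow> complex^'n^'m^'g \<Rightarrow> complex^'n^'n" where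
  "Umat H s2 gk V0 = matrix_inv
     ((\<Sum>g\<in>UNIV. H ** (V0 $ g) ** hconj (V0 $ g) ** hconj H) + mat (complex_of_real s2))
     ** H ** (V0 $ gk)"

definition Qmat :: "complex^'m^'n \<Rightarrow> real \<Rightarrow> 'g::finite \<Rightarrow> complex^'n^'m^'g \<Rightarrow> complex^'n^'n" where
  "Qmat H s2 gk V0 = mat 1 - hconj (Umat H s2 gk V0) ** H ** (V0 $ gk)"

definition Amat :: "complex^'m^'n \<Rightarrow> real \<Rightarrow> 'g::finite \<Rightarrow> complex^'n^'m^'g \<Rightarrow> complex^'m^'m" where
  "Amat H s2 gk V0 = hconj H ** Umat H s2 gk V0 ** matrix_inv (Qmat H s2 gk V0)
       ** hconj (Umat H s2 gk V0) ** H"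

definition Bmat :: "complex^'m^'n \<Rightarrow> real \<Rightarrow> 'g::finite \<Rightarrow> complex^'n^'m^'g \<Rightarrow> complex^'m^'n" where
  "Bmat H s2 gk V0 = - (matrix_inv (Qmat H s2 gk V0) ** hconj (Umat H s2 gk V0) ** H)"

definition bconst :: "complex^'m^'n \<Rightarrow> real \<Rightarrow> 'g::finite \<Rightarrow> real \<Rightarrow> real \<Rightarrow> complex^'n^'m^'g \<Rightarrow> real" where
  "bconst H s2 gk C0 eta0 V0 =
     Re (trace (matrix_inv (Qmat H s2 gk V0) **
          (mat 1 + mat (complex_of_real s2) ** (hconj (Umat H s2 gk V0) ** Umat H s2 gk V0))))
     + ln (Re (det (Qmat H s2 gk V0))) + (eta0 + C0)^2 / 2 - real CARD('n)"

text \<open>The surrogate f_{k,t}^{(i)}; Fk is F_{g_k}, (C0, eta0, V0) the expansion point.\<close>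
definition fsur :: "complex^'m^'n \<Rightarrow> real \<Rightarrow> real \<Rightarrow> 'g::finite \<Rightarrow> real \<Rightarrow> real \<Rightarrow> complex^'n^'m^'g
     \<Rightarrow> real \<Rightarrow> real \<Rightarrow> complex^'n^'m^'g \<Rightarrow> real" where
  "fsur H s2 Fk gk C0 eta0 V0 C eta V =
     (\<Sum>g\<in>UNIV. Re (trace (hconj (V $ g) ** Amat H s2 gk V0 ** (V $ g))))
     + 2 * Re (trace (Bmat H s2 gk V0 ** (V $ gk)))
     + (eta^2 + C^2) / 2 + Fk * eta - (eta0 + C0) * (eta + C)
     + bconst H s2 gk C0 eta0 V0"

definition rhs :: "complex^'m^'n \<Rightarrow> real \<Rightarrow> real \<Rightarrow> 'g::finite
     \<Rightarrow> real \<Rightarrow> real \<Rightarrow> complex^'n^'m^'g \<Rightarrow> real" where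
  "rhs H s2 Fk gk C eta V = (Fk - C) * eta
     - ln (Re (det (mat 1 + H ** (V $ gk) ** hconj (V $ gk) ** hconj H ** Jmat H s2 gk V)))"

definition Eunit :: "'g::finite \<Rightarrow> 'm \<Rightarrow> 'n \<Rightarrow> complex \<Rightarrow> complex^'n^'m^'g" where
  "Eunit g i j c = (\<chi> h a b. if h = g \<and> a = i \<and> b = j then c else 0)"

definition quadratic_fun :: "('a::real_vector \<Rightarrow> real) \<Rightarrow> bool" where
  "quadratic_fun f \<longleftrightarrow> (\<exists>B l c. bilinear B \<and> linear l \<and> (\<forall>x. f x = B x x + l x + c))"

end

theory Submission
  imports Defs "Jordan_Normal_Form.Schur_Decomposition"
begin

hide_const (open) Matrix.mat Matrix.vec Matrix.row Matrix.col Determinant.det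
no_notation Matrix.vec_index (infixl "$" 100)
no_notation Matrix.scalar_prod (infix "\<bullet>" 70)


definition idx :: "nat \<Rightarrow> 'n::finite" where
  "idx = (SOME f. bij_betw f {0..<CARD('n)} (UNIV::'n set))"

lemma idx_bij: "bij_betw (idx::nat\<Rightarrow>'n::finite) {0..<CARD('n)} UNIV"
proof -
  have "\<exists>f. bij_betw f {0..<CARD('n)} (UNIV::'n set)"
    using ex_bij_betw_nat_finite[of "UNIV::'n set"] by simp
  then show ?thesis unfolding idx_def by (rule someI_ex)
qed

definition pos :: "'n::finite \<Rightarrow> nat" where
  "pos = inv_into {0..<CARD('n)} idx"

lemma pos_bij: "bij_betw (pos::'n::finite\<Rightarrow>nat) UNIV {0..<CARD('n)}"
  unfolding pos_def by (rule bij_betw_inv_into[OF idx_bij])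

lemma pos_lt[simp]: "pos (a::'n::finite) < CARD('n)"
  using pos_bij[where 'n='n] by (auto simp: bij_betw_def)

lemma idx_pos[simp]: "idx (pos (a::'n::finite)) = a"
  unfolding pos_def using idx_bij[where 'n='n] by (simp add: bij_betw_inv_into_right)

lemma pos_idx[simp]: "i < CARD('n::finite) \<Longrightarrow> pos (idx i :: 'n) = i"
  unfolding pos_def using idx_bij[where 'n='n] by (simp add: bij_betw_inv_into_left)

lemma idx_inj: "i < CARD('n::finite) \<Longrightarrow> j < CARD('n) \<Longrightarrow> (idx i :: 'n) = idx j \<longleftrightarrow> i = j"
  by (metis pos_idx)

definition to_jnf :: "'a^'n^'n::finite \<Rightarrow> 'a Matrix.mat" where
  "to_jnf A = Matrix.mat CARD('n) CARD('n) (\<lambda>(i,j). A $ idx i $ idx j)"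

lemma to_jnf_carrier[simp]: "to_jnf (A::'a^'n^'n::finite) \<in> carrier_mat CARD('n) CARD('n)"
  and to_jnf_dim[simp]: "dim_row (to_jnf (A::'a^'n^'n::finite)) = CARD('n)" "dim_col (to_jnf A) = CARD('n)"
  unfolding to_jnf_def by auto

lemma to_jnf_index[simp]: "i < CARD('n) \<Longrightarrow> j < CARD('n) \<Longrightarrow> to_jnf (A::'a^'n^'n::finite) $$ (i,j) = A $ idx i $ idx j"
  unfolding to_jnf_def by auto

lemma sum_idx: "(\<Sum>i\<in>{0..<CARD('n::finite)}. f (idx i :: 'n)) = (\<Sum>a\<in>UNIV. f a)"
  using sum.reindex_bij_betw[OF idx_bij, of f] by simp

lemma prod_idx: "(\<Prod>i\<in>{0..<CARD('n::finite)}. f (idx i :: 'n)) = (\<Prod>a\<in>UNIV. f a)"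
  using prod.reindex_bij_betw[OF idx_bij, of f] by simp

lemma to_jnf_mult: "to_jnf ((A::'a::comm_ring_1^'n^'n::finite) ** B) = to_jnf A * to_jnf B"
proof (rule eq_matI)
  fix i j assume "i < dim_row (to_jnf A * to_jnf B)" "j < dim_col (to_jnf A * to_jnf B)"
  then show "to_jnf (A ** B) $$ (i, j) = (to_jnf A * to_jnf B) $$ (i, j)"
    using sum_idx[of "\<lambda>k. A $ idx i $ k * B $ k $ idx j"]
    by (auto simp: matrix_matrix_mult_def scalar_prod_def)
qed auto

lemma to_jnf_add: "to_jnf ((A::'a::comm_ring_1^'n^'n::finite) + B) = to_jnf A + to_jnf B"
  by (rule eq_matI) auto

lemma to_jnf_diff: "to_jnf ((A::'a::comm_ring_1^'n^'n::finite) - B) = to_jnf A - to_jnf B"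
  by (rule eq_matI) auto

lemma to_jnf_uminus: "to_jnf (- (A::'a::comm_ring_1^'n^'n::finite)) = - to_jnf A"
  by (rule eq_matI) auto

lemma to_jnf_one: "to_jnf (mat 1 :: 'a::comm_ring_1^'n^'n::finite) = 1\<^sub>m CARD('n)"
  by (rule eq_matI) (auto simp: Finite_Cartesian_Product.mat_def idx_inj)

lemma to_jnf_det: "Determinant.det (to_jnf (A::'a::comm_ring_1^'n^'n::finite)) = det A"
proof -
  let ?n = "CARD('n)"
  let ?S = "{q. q permutes (UNIV::'n set)}"
  let ?T = "{p. p permutes {0..<?n}}"
  have bp: "bij_betw (pos::'n\<Rightarrow>nat) UNIV {0..<?n}" by (rule pos_bij)
  have ip: "inj_on (pos::'n\<Rightarrow>nat) UNIV" using bp by (auto simp: bij_betw_def)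
  have "Determinant.det (to_jnf A) = (\<Sum>p\<in>?T. signof p * (\<Prod>i=0..<?n. A $ idx i $ idx (p i)))"
    by (subst det_def'[OF to_jnf_carrier]) (auto intro!: sum.cong prod.cong simp: permutes_in_image)
  also have "\<dots> = (\<Sum>q\<in>?S. of_int (sign q) * (\<Prod>a\<in>UNIV. A $ a $ q a))"
  proof (rule sym, rule sum.reindex_bij_witness[where j="map_permutation UNIV pos" and i="map_permutation {0..<?n} idx"])
    fix q assume q: "q \<in> ?S"
    show "map_permutation {0..<?n} idx (map_permutation UNIV pos q) = q"
      by (rule map_permutation_compose_inv[OF bp]) (use q in auto)
    show "map_permutation UNIV pos q \<in> ?T"
      using map_permutation_permutes[OF bp] q by auto
    have mp: "map_permutation UNIV pos q (pos a) = pos (q a)" for a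
      by (rule map_permutation_apply[OF ip]) auto
    have "(\<Prod>i=0..<?n. A $ idx i $ idx (map_permutation UNIV pos q i))
        = (\<Prod>a\<in>UNIV. A $ a $ idx (map_permutation UNIV pos q (pos a)))"
      using prod.reindex_bij_betw[OF bp, of "\<lambda>i. A $ idx i $ idx (map_permutation UNIV pos q i)"]
      by simp
    also have "\<dots> = (\<Prod>a\<in>UNIV. A $ a $ q a)" by (simp add: mp)
    finally show "signof (map_permutation UNIV pos q) * (\<Prod>i=0..<?n. A $ idx i $ idx (map_permutation UNIV pos q i))
       = of_int (sign q) * (\<Prod>a\<in>UNIV. A $ a $ q a)"
      using sign_map_permutation[OF ip, of q] q by simp
  next
    fix p assume p: "p \<in> ?T"
    have bi: "bij_betw (idx::nat\<Rightarrow>'n) {0..<?n} UNIV" by (rule idx_bij)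
    show "map_permutation UNIV pos (map_permutation {0..<?n} (idx::nat\<Rightarrow>'n) p) = p"
      using map_permutation_compose_inv[OF bi, of p pos] p by auto
    show "map_permutation {0..<?n} idx p \<in> ?S"
      using map_permutation_permutes[OF bi] p by auto
  qed
  also have "\<dots> = det A" by (simp add: Determinants.det_def)
  finally show ?thesis .
qed

definition jtrace :: "'a::comm_ring_1 Matrix.mat \<Rightarrow> 'a" where
  "jtrace A = (\<Sum>i=0..<dim_row A. A $$ (i,i))"

lemma jtrace_comm:
  assumes "X \<in> carrier_mat n n" "Y \<in> carrier_mat n n"
  shows "jtrace (X * Y) = jtrace (Y * X)"
proof -
  have "jtrace (X * Y) = (\<Sum>i=0..<n. \<Sum>k=0..<n. X $$ (i,k) * Y $$ (k,i))"
    using assms by (auto simp: jtrace_def scalar_prod_def intro!: sum.cong)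
  also have "\<dots> = (\<Sum>k=0..<n. \<Sum>i=0..<n. Y $$ (k,i) * X $$ (i,k))"
    by (subst sum.swap) (simp add: mult.commute)
  also have "\<dots> = jtrace (Y * X)"
    using assms by (auto simp: jtrace_def scalar_prod_def intro!: sum.cong)
  finally show ?thesis .
qed

lemma to_jnf_trace: "jtrace (to_jnf (A::'a::comm_ring_1^'n^'n::finite)) = trace A"
  using sum_idx[of "\<lambda>a. A $ a $ a"] by (simp add: jtrace_def trace_def)

lemma prod_list_pos:
  assumes "\<forall>e\<in>set es. Im e = 0 \<and> Re e > 0"
  shows "Im (prod_list es) = 0 \<and> Re (prod_list es) > 0 \<and>
         ln (Re (prod_list es)) \<le> Re (sum_list es) - real (length es)"
  using assms
proof (induction es)
  case Nil
  then show ?case by simp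
next
  case (Cons e es)
  then have IH: "Im (prod_list es) = 0" "Re (prod_list es) > 0"
      "ln (Re (prod_list es)) \<le> Re (sum_list es) - real (length es)"
    and e: "Im e = 0" "Re e > 0" by auto
  have re: "Re (prod_list (e # es)) = Re e * Re (prod_list es)" using IH e by simp
  have "ln (Re e * Re (prod_list es)) = ln (Re e) + ln (Re (prod_list es))"
    using IH e by (simp add: ln_mult)
  also have "\<dots> \<le> (Re e - 1) + (Re (sum_list es) - real (length es))"
    using ln_le_minus_one[OF e(2)] IH(3) by linarith
  finally show ?case using IH e re by simp
qed

lemma eig_det_trace:
  fixes M :: "complex^'n^'n::finite"
  assumes ev: "\<And>x l. x \<noteq> 0 \<Longrightarrow> M *v x = l *s x \<Longrightarrow> Im l = 0 \<and> Re l > 0"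
  shows "Im (det M) = 0 \<and> Re (det M) > 0 \<and> ln (Re (det M)) \<le> Re (trace M) - real CARD('n)"
proof -
  let ?n = "CARD('n)"
  define MJ where "MJ = to_jnf M"
  have MJc: "MJ \<in> carrier_mat ?n ?n" unfolding MJ_def by simp
  obtain es where cp: "char_poly MJ = (\<Prod>a\<leftarrow>es. [:- a, 1:])" and les: "length es = ?n"
    using char_poly_factorized[OF MJc] by blast
  obtain B P Q where sd: "schur_decomposition MJ es = (B,P,Q)"
    by (cases "schur_decomposition MJ es") auto
  from schur_decomposition[OF MJc cp sd]
  have sw: "similar_mat_wit MJ B P Q" and ut: "upper_triangular B" and dg: "diag_mat B = es"
    by auto
  note swD = similar_mat_witD[OF _ sw, of ?n, simplified MJ_def to_jnf_dim, folded MJ_def]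
  have evs: "Im e = 0 \<and> Re e > 0" if e: "e \<in> set es" for e
  proof -
    have "poly (char_poly MJ) e = 0"
      unfolding cp using e by (induction es) auto
    then have "eigenvalue MJ e" using eigenvalue_root_char_poly[OF MJc] by simp
    then obtain v where v: "v \<in> carrier_vec ?n" "v \<noteq> 0\<^sub>v ?n" "MJ *\<^sub>v v = e \<cdot>\<^sub>v v"
      unfolding eigenvalue_def eigenvector_def using MJc by auto
    define x :: "complex^'n" where "x = (\<chi> a. vec_index v (pos a))"
    have dv: "dim_vec v = ?n" using v(1) by simp
    have "x \<noteq> 0"
    proof
      assume x0: "x = 0"
      have "v = 0\<^sub>v ?n"
      proof (rule eq_vecI)
        fix i assume "i < dim_vec (0\<^sub>v ?n :: complex Matrix.vec)"
        then have i: "i < ?n" by simp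
        have "x $ idx i = 0" using x0 by simp
        then show "vec_index v i = vec_index (0\<^sub>v ?n) i" using i by (simp add: x_def)
      qed (simp add: dv)
      with v(2) show False by simp
    qed
    moreover have "M *v x = e *s x"
    proof (rule iffD2[OF Finite_Cartesian_Product.vec_eq_iff], rule allI)
      fix a :: 'n
      have "vec_index (MJ *\<^sub>v v) (pos a) = vec_index (e \<cdot>\<^sub>v v) (pos a)" using v(3) by simp
      then have "(\<Sum>j=0..<?n. M $ a $ idx j * vec_index v j) = e * vec_index v (pos a)"
        using dv by (simp add: MJ_def scalar_prod_def)
      moreover have "(\<Sum>j=0..<?n. M $ a $ idx j * vec_index v j) = (\<Sum>b\<in>UNIV. M $ a $ b * x $ b)"
        using sum_idx[of "\<lambda>b. M $ a $ b * x $ b"] by (simp add: x_def)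
      ultimately show "(M *v x) $ a = (e *s x) $ a"
        by (simp add: matrix_vector_mult_def x_def)
    qed
    ultimately show ?thesis using ev by blast
  qed
  have "det M = Determinant.det MJ" unfolding MJ_def by (simp add: to_jnf_det)
  also have "\<dots> = Determinant.det B"
    using det_similar[of MJ B] sw unfolding similar_mat_def by blast
  also have "\<dots> = prod_list es" using det_upper_triangular[OF ut swD(5)] dg by simp
  finally have dM: "det M = prod_list es" .
  have "trace M = jtrace MJ" unfolding MJ_def by (simp add: to_jnf_trace)
  also have "MJ = P * (B * Q)" using swD(3) swD(5-7) by (simp add: assoc_mult_mat)
  also have "jtrace (P * (B * Q)) = jtrace ((B * Q) * P)"
    by (rule jtrace_comm[of _ ?n]) (use swD in auto)
  also have "(B * Q) * P = B" using swD(2) swD(5-7) by (simp add: assoc_mult_mat)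
  also have "jtrace B = sum_list es"
    unfolding dg[symmetric] diag_mat_def jtrace_def by (simp add: sum_list_sum_nth)
  finally have tM: "trace M = sum_list es" .
  show ?thesis unfolding dM tM using prod_list_pos[of es] evs les by simp
qed

lemma sylvester:
  fixes X Y :: "complex^'n^'n::finite"
  shows "det (mat 1 + X ** Y) = det (mat 1 + Y ** X)"
proof -
  let ?n = "CARD('n)"
  define X' where "X' = to_jnf X"
  define Y' where "Y' = to_jnf Y"
  have c: "X' \<in> carrier_mat ?n ?n" "Y' \<in> carrier_mat ?n ?n"
    unfolding X'_def Y'_def by auto
  define M1 where "M1 = four_block_mat (1\<^sub>m ?n) (- X') Y' (1\<^sub>m ?n)"
  define M2 where "M2 = four_block_mat (1\<^sub>m ?n) Y' (- X') (1\<^sub>m ?n)"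
  have "Determinant.det M1 = Determinant.det (1\<^sub>m ?n * 1\<^sub>m ?n - (- X') * Y')"
    unfolding M1_def by (rule det_four_block_mat) (use c in auto)
  also have "1\<^sub>m ?n * 1\<^sub>m ?n - (- X') * Y' = to_jnf (mat 1 + X ** Y)"
    using c by (rule_tac eq_matI) (auto simp: to_jnf_add to_jnf_mult to_jnf_one X'_def Y'_def)
  finally have d1: "Determinant.det M1 = det (mat 1 + X ** Y)" by (simp add: to_jnf_det)
  have "Determinant.det M2 = Determinant.det (1\<^sub>m ?n * 1\<^sub>m ?n - Y' * (- X'))"
    unfolding M2_def by (rule det_four_block_mat) (use c in auto)
  also have "1\<^sub>m ?n * 1\<^sub>m ?n - Y' * (- X') = to_jnf (mat 1 + Y ** X)"
    using c by (rule_tac eq_matI) (auto simp: to_jnf_add to_jnf_mult to_jnf_one X'_def Y'_def)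
  finally have d2: "Determinant.det M2 = det (mat 1 + Y ** X)" by (simp add: to_jnf_det)
  have M1c: "M1 \<in> carrier_mat (?n + ?n) (?n + ?n)" unfolding M1_def using c by auto
  define M3 where "M3 = Matrix.mat (?n + ?n) (?n + ?n) (\<lambda>(i,j).
    M1 $$ ((if i < ?n then i + ?n else i - ?n),j))"
  have M3c: "M3 \<in> carrier_mat (?n + ?n) (?n + ?n)" unfolding M3_def by simp
  have "Determinant.det M1 = (-1)^(?n * ?n) * Determinant.det M3"
    unfolding M3_def by (rule det_swap_rows[OF M1c])
  also have "Determinant.det M3 = (-1)^(?n * ?n) * Determinant.det (Matrix.mat (?n + ?n) (?n + ?n) (\<lambda>(i,j).
    M3 $$ (i,(if j < ?n then j + ?n else j - ?n))))"
    by (rule det_swap_cols[OF M3c])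
  also have "Matrix.mat (?n + ?n) (?n + ?n) (\<lambda>(i,j).
    M3 $$ (i,(if j < ?n then j + ?n else j - ?n))) = M2"
    unfolding M2_def M3_def M1_def using c by (rule_tac eq_matI) auto
  finally have "Determinant.det M1 = ((-1)^(?n * ?n) * (-1)^(?n * ?n)) * Determinant.det M2"
    by simp
  also have "(-1)^(?n * ?n) * (-1)^(?n * ?n) = (1::complex)"
    by (simp add: power_add[symmetric])
  finally show ?thesis using d1 d2 by simp
qed


lemmas veq = Finite_Cartesian_Product.vec_eq_iff

lemma hconj_nth[simp]: "hconj A $ i $ j = cnj (A $ j $ i)"
  by (simp add: hconj_def)

lemma hconj_hconj[simp]: "hconj (hconj A) = A"
  by (simp add: veq)

lemma hconj_mult: "hconj ((A::complex^'n^'m) ** B) = hconj B ** hconj A"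
  by (simp add: veq matrix_matrix_mult_def mult.commute)

lemma hconj_add: "hconj (A + B) = hconj A + hconj (B::complex^'n^'m)"
  by (simp add: veq)

lemma hconj_diff: "hconj (A - B) = hconj A - hconj (B::complex^'n^'m)"
  by (simp add: veq)

lemma hconj_uminus: "hconj (- A) = - hconj (A::complex^'n^'m)"
  by (simp add: veq)

lemma hconj_mat: "hconj (mat c :: complex^'n^'n) = mat (cnj c)"
  by (simp add: veq Finite_Cartesian_Product.mat_def)

lemma hconj_sum: "hconj (\<Sum>g\<in>X. f g) = (\<Sum>g\<in>X. hconj (f g :: complex^'n^'m))"
  by (induction X rule: infinite_finite_induct) (auto simp: hconj_add veq)

lemma trace_hconj: "trace (hconj (A::complex^'n^'n)) = cnj (trace A)"
  by (simp add: trace_def)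

definition cdot :: "complex^'n \<Rightarrow> complex^'n \<Rightarrow> complex" where
  "cdot x y = (\<Sum>i\<in>UNIV. cnj (x $ i) * y $ i)"

lemma cdot_mult: "cdot x ((A::complex^'n^'m) *v y) = cdot (hconj A *v x) y"
proof -
  have "cdot x (A *v y) = (\<Sum>i\<in>UNIV. \<Sum>j\<in>UNIV. cnj (x $ i) * A $ i $ j * y $ j)"
    by (simp add: cdot_def matrix_vector_mult_def sum_distrib_left mult.assoc)
  also have "\<dots> = (\<Sum>j\<in>UNIV. \<Sum>i\<in>UNIV. cnj (x $ i) * A $ i $ j * y $ j)"
    by (rule sum.swap)
  also have "\<dots> = cdot (hconj A *v x) y"
    by (simp add: cdot_def matrix_vector_mult_def sum_distrib_right sum_distrib_left mult_ac)
  finally show ?thesis .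
qed

lemma cdot_add_right: "cdot x (y + z) = cdot x y + cdot x z"
  by (simp add: cdot_def distrib_left sum.distrib)

lemma cdot_diff_right: "cdot x (y - z) = cdot x y - cdot x z"
  by (simp add: cdot_def right_diff_distrib sum_subtractf)

lemma cdot_scale_right: "cdot x (c *s y) = c * cdot x y"
  by (simp add: cdot_def sum_distrib_left mult.left_commute)

lemma cdot_sum_right: "cdot x (\<Sum>g\<in>X. f g) = (\<Sum>g\<in>X. cdot x (f g))"
proof (induction X rule: infinite_finite_induct)
  case (insert a F)
  then show ?case by (simp add: cdot_add_right)
qed (simp_all add: cdot_def)

lemma cdot_conj: "cnj (cdot x y) = cdot y x"
  by (simp add: cdot_def mult.commute)

lemma cdot_self: "cdot x x = of_real (\<Sum>i\<in>UNIV. (cmod (x $ i))^2)"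
proof -
  have "cnj (x$i) * x$i = of_real ((cmod (x$i))^2)" for i
    by (metis complex_norm_square mult.commute of_real_power)
  then show ?thesis by (simp add: cdot_def)
qed

lemma cdot_self_Im[simp]: "Im (cdot x x) = 0"
  by (simp add: cdot_self)

lemma cdot_self_ge0: "Re (cdot x x) \<ge> 0"
  by (simp add: cdot_self sum_nonneg)

lemma cdot_self_pos: "x \<noteq> 0 \<Longrightarrow> Re (cdot x x) > 0"
proof -
  assume "x \<noteq> 0"
  then obtain i where i: "x $ i \<noteq> 0" by (auto simp: veq)
  have "(cmod (x $ i))^2 \<le> (\<Sum>i\<in>UNIV. (cmod (x $ i))^2)"
    by (rule member_le_sum) auto
  moreover have "(cmod (x $ i))^2 > 0" using i by simp
  ultimately have "(\<Sum>i\<in>UNIV. (cmod (x $ i))^2) > 0" by linarith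
  then show ?thesis by (simp add: cdot_self)
qed

lemma mat_mulv: "(mat c :: 'a::semiring_1^'n^'n) *v x = c *s x"
proof -
  have "(\<Sum>j\<in>UNIV. (if i = j then c else 0) * x $ j) = c * x $ i" for i
  proof -
    have "(\<Sum>j\<in>UNIV. (if i = j then c else 0) * x $ j) = (\<Sum>j\<in>UNIV. if i = j then c * x $ j else 0)"
      by (rule sum.cong) auto
    then show ?thesis by simp
  qed
  then show ?thesis unfolding veq matrix_vector_mult_def Finite_Cartesian_Product.mat_def by simp
qed

lemma add_mulv: "((A::'a::semiring_1^'n^'m) + B) *v x = A *v x + B *v x"
  by (simp add: veq matrix_vector_mult_def distrib_right sum.distrib)

lemma sum_mulv: "(\<Sum>g\<in>X. (f g :: 'a::semiring_1^'n^'m)) *v x = (\<Sum>g\<in>X. f g *v x)"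
proof (induction X rule: infinite_finite_induct)
  case (insert a F)
  then show ?case by (simp add: add_mulv)
qed (simp_all add: veq matrix_vector_mult_def)

definition herm :: "complex^'n^'n \<Rightarrow> bool" where
  "herm A \<longleftrightarrow> hconj A = A"

definition psd :: "complex^'n^'n \<Rightarrow> bool" where
  "psd A \<longleftrightarrow> (\<forall>x. Re (cdot x (A *v x)) \<ge> 0)"

lemma herm_Im: "herm A \<Longrightarrow> Im (cdot x (A *v x)) = 0"
proof -
  assume h: "herm A"
  have "cdot x (A *v x) = cdot (A *v x) x" using cdot_mult[of x A x] h by (simp add: herm_def)
  also have "\<dots> = cnj (cdot x (A *v x))" by (simp add: cdot_conj)
  finally show ?thesis by (metis Reals_cnj_iff complex_is_Real_iff)
qed

lemma psd_gram: "psd ((X::complex^'k^'n) ** hconj X)"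
  unfolding psd_def
proof
  fix x :: "complex^'n"
  have "cdot x ((X ** hconj X) *v x) = cdot (hconj X *v x) (hconj X *v x)"
    by (simp add: cdot_mult matrix_vector_mul_assoc[symmetric])
  then show "Re (cdot x ((X ** hconj X) *v x)) \<ge> 0" by (simp add: cdot_self_ge0)
qed

lemma psd_add: "psd A \<Longrightarrow> psd B \<Longrightarrow> psd (A + B)"
  by (auto simp: psd_def add_mulv cdot_add_right intro: add_nonneg_nonneg)

lemma psd_sum: "(\<And>g. g \<in> X \<Longrightarrow> psd (f g)) \<Longrightarrow> psd (\<Sum>g\<in>X. f g)"
  unfolding psd_def by (auto simp: sum_mulv cdot_sum_right intro!: sum_nonneg)

lemma psd_mat: "c \<ge> 0 \<Longrightarrow> psd (mat (complex_of_real c))"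
  by (auto simp: psd_def mat_mulv cdot_scale_right cdot_self intro!: mult_nonneg_nonneg sum_nonneg)

lemma herm_add: "herm A \<Longrightarrow> herm B \<Longrightarrow> herm (A + B)"
  by (simp add: herm_def hconj_add)

lemma herm_sum: "(\<And>g. g \<in> X \<Longrightarrow> herm (f g)) \<Longrightarrow> herm (\<Sum>g\<in>X. f g)"
  by (simp add: herm_def hconj_sum)

lemma herm_gram: "herm ((X::complex^'k^'n) ** hconj X)"
  by (simp add: herm_def hconj_mult)

lemma herm_mat_real: "herm (mat (complex_of_real c))"
  by (simp add: herm_def hconj_mat)

lemma herm_mat1: "herm (mat 1)"
  by (simp add: herm_def hconj_mat)

lemma herm_cong: "herm A \<Longrightarrow> herm (hconj Z ** A ** Z)"
  by (simp add: herm_def hconj_mult matrix_mul_assoc)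

lemma psd_cong: "psd A \<Longrightarrow> psd (hconj Z ** A ** Z)"
  unfolding psd_def
proof
  fix x assume "\<forall>x. 0 \<le> Re (cdot x (A *v x))"
  moreover have "cdot x ((hconj Z ** A ** Z) *v x) = cdot (Z *v x) (A *v (Z *v x))"
    by (simp add: cdot_mult matrix_vector_mul_assoc[symmetric])
  ultimately show "0 \<le> Re (cdot x ((hconj Z ** A ** Z) *v x))" by simp
qed

lemma trace_form: "trace (hconj K ** W ** K) = (\<Sum>j\<in>UNIV. cdot (column j K) (W *v column j K))"
  unfolding trace_def
proof (rule sum.cong[OF refl])
  fix j
  have "(hconj K ** W ** K) $ j $ j = (\<Sum>k\<in>UNIV. \<Sum>i\<in>UNIV. cnj (K $ i $ j) * W $ i $ k * K $ k $ j)"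
    by (simp add: matrix_matrix_mult_def sum_distrib_right)
  also have "\<dots> = (\<Sum>i\<in>UNIV. \<Sum>k\<in>UNIV. cnj (K $ i $ j) * W $ i $ k * K $ k $ j)"
    by (rule sum.swap)
  also have "\<dots> = cdot (column j K) (W *v column j K)"
    by (simp add: cdot_def column_def matrix_vector_mult_def sum_distrib_left mult.assoc)
  finally show "(hconj K ** W ** K) $ j $ j = cdot (column j K) (W *v column j K)" .
qed

lemma psd_trace: "psd W \<Longrightarrow> Re (trace (hconj K ** W ** K)) \<ge> 0"
  unfolding trace_form psd_def by (simp add: Re_sum sum_nonneg)

lemma herm_trace: "herm W \<Longrightarrow> Im (trace (hconj K ** W ** K)) = 0"
  unfolding trace_form by (simp add: Im_sum herm_Im)

lemma psd_trace_gram: "psd W \<Longrightarrow> Re (trace (W ** (K ** hconj K))) \<ge> 0"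
  using psd_trace[of W K] trace_mul_sym[of W "K ** hconj K"] trace_mul_sym[of "hconj K ** W" K]
  by (simp add: matrix_mul_assoc)

lemma inv_props:
  assumes "invertible (A::'a::field^'n^'n)"
  shows "A ** matrix_inv A = mat 1" "matrix_inv A ** A = mat 1"
proof -
  from assms obtain B where "A ** B = mat 1 \<and> B ** A = mat 1" unfolding invertible_def by blast
  then have "A ** matrix_inv A = mat 1 \<and> matrix_inv A ** A = mat 1"
    unfolding matrix_inv_def by (rule someI)
  then show "A ** matrix_inv A = mat 1" "matrix_inv A ** A = mat 1" by auto
qed

lemma inv_unique:
  assumes "(A::'a::field^'n^'n) ** B = mat 1"
  shows "matrix_inv A = B" "invertible A"
proof -
  have BA: "B ** A = mat 1" using assms matrix_left_right_inverse by blast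
  then show inv: "invertible A" unfolding invertible_def using assms by blast
  have "matrix_inv A = matrix_inv A ** (A ** B)" by (simp add: assms)
  also have "\<dots> = B" by (simp add: matrix_mul_assoc inv_props[OF inv])
  finally show "matrix_inv A = B" .
qed

lemma inv_herm:
  assumes "herm A" "invertible A"
  shows "herm (matrix_inv A)"
proof -
  have "A ** hconj (matrix_inv A) = mat 1"
    using arg_cong[OF inv_props(2)[OF assms(2)], of hconj] assms(1)
    by (simp add: hconj_mult herm_def hconj_mat)
  then show ?thesis using inv_unique(1) unfolding herm_def by metis
qed

lemma psd_inv:
  assumes "herm A" "psd A" "invertible A"
  shows "psd (matrix_inv A)"
  unfolding psd_def
proof
  fix y
  define z where "z = matrix_inv A *v y"
  have y: "y = A *v z" unfolding z_def by (simp add: matrix_vector_mul_assoc inv_props[OF assms(3)])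
  have "cdot y (matrix_inv A *v y) = cdot (A *v z) z" by (simp add: z_def[symmetric] y[symmetric])
  also have "\<dots> = cdot z (A *v z)"
    using cdot_mult[of z A z] assms(1) by (simp add: herm_def)
  finally show "Re (cdot y (matrix_inv A *v y)) \<ge> 0" using assms(2) by (simp add: psd_def)
qed

lemma coercive_invertible:
  assumes "\<And>x. Re (cdot x ((A::complex^'n^'n) *v x)) \<ge> c * Re (cdot x x)" "c > 0"
  shows "invertible A"
proof -
  have "\<forall>x. A *v x = 0 \<longrightarrow> x = 0"
  proof (intro allI impI)
    fix x assume "A *v x = 0"
    then have "Re (cdot x (A *v x)) = 0" by (simp add: cdot_def)
    with assms(1)[of x] have "c * Re (cdot x x) \<le> 0" by simp
    then have "Re (cdot x x) \<le> 0" using assms(2) by (simp add: mult_le_0_iff)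
    then show "x = 0" using cdot_self_pos[of x] by force
  qed
  then show ?thesis using matrix_left_invertible_ker invertible_left_inverse by blast
qed


lemma mrdist: "((A::'a::semiring_1^'n^'m) + B) ** C = A ** C + B ** C"
  by (simp add: veq matrix_matrix_mult_def distrib_right sum.distrib)

lemma mldist_diff: "(A::'a::ring_1^'n^'m) ** (B - C) = A ** B - A ** C"
  by (simp add: veq matrix_matrix_mult_def right_diff_distrib sum_subtractf)

lemma mrdist_diff: "((A::'a::ring_1^'n^'m) - B) ** C = A ** C - B ** C"
  by (simp add: veq matrix_matrix_mult_def left_diff_distrib sum_subtractf)

lemma muminus_left: "(- (A::'a::ring_1^'n^'m)) ** B = - (A ** B)"
  by (simp add: veq matrix_matrix_mult_def sum_negf)

lemma muminus_right: "(A::'a::ring_1^'n^'m) ** (- B) = - (A ** B)"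
  by (simp add: veq matrix_matrix_mult_def sum_negf)

lemma msum_left: "(\<Sum>g\<in>X. (f g::'a::semiring_1^'n^'m)) ** B = (\<Sum>g\<in>X. f g ** B)"
proof (induction X rule: infinite_finite_induct)
  case (insert a F) then show ?case by (simp add: mrdist)
qed simp_all

lemma msum_right: "(B::'a::semiring_1^'n^'m) ** (\<Sum>g\<in>X. f g) = (\<Sum>g\<in>X. B ** f g)"
proof (induction X rule: infinite_finite_induct)
  case (insert a F) then show ?case by (simp add: matrix_add_ldistrib)
qed simp_all

lemma mat_real_left: "(mat (complex_of_real s) :: complex^'n^'n) ** A = s *\<^sub>R A"
proof -
  have "mat (complex_of_real s) = s *\<^sub>R (mat 1 :: complex^'n^'n)"
    by (simp add: veq Finite_Cartesian_Product.mat_def of_real_def)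
  then show ?thesis by (simp add: scalar_matrix_assoc[symmetric])
qed

lemma mat_real_right: "A ** (mat (complex_of_real s) :: complex^'n^'n) = s *\<^sub>R A"
proof -
  have "mat (complex_of_real s) = s *\<^sub>R (mat 1 :: complex^'n^'n)"
    by (simp add: veq Finite_Cartesian_Product.mat_def of_real_def)
  then show ?thesis by (simp add: matrix_scalar_ac)
qed

lemma trace_sum: "trace (\<Sum>g\<in>X. f g) = (\<Sum>g\<in>X. trace (f g :: 'a::comm_semiring_1^'n^'n))"
proof (induction X rule: infinite_finite_induct)
  case (insert a F) then show ?case by (simp add: trace_add)
qed (simp_all add: trace_def)

lemma trace_scaleR: "trace (r *\<^sub>R (A :: complex^'n^'n)) = r *\<^sub>R trace A"
  by (simp add: trace_def scaleR_sum_right)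

lemma trace_uminus: "trace (- (A :: complex^'n^'n)) = - trace A"
  by (simp add: trace_def sum_negf)

lemma hconj_scaleR: "hconj (r *\<^sub>R (A :: complex^'n^'m)) = r *\<^sub>R hconj A"
  by (simp add: veq)

definition pd :: "complex^'n^'n \<Rightarrow> bool" where
  "pd A \<longleftrightarrow> herm A \<and> (\<forall>x. x \<noteq> 0 \<longrightarrow> Re (cdot x (A *v x)) > 0)"

lemma real_ratio:
  assumes "a = l * c" "Im a = 0" "Re a > 0" "Im c = 0" "Re c > 0"
  shows "Im l = 0 \<and> Re l > 0"
proof -
  have c0: "c \<noteq> 0" using assms(5) by auto
  have "l = a / c" using assms(1) c0 by simp
  also have "a = of_real (Re a)" using assms(2) by (simp add: complex_eq_iff)
  also have "c = of_real (Re c)" using assms(4) by (simp add: complex_eq_iff)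
  finally have "l = of_real (Re a / Re c)" by simp
  then show ?thesis using assms(3,5) by simp
qed

lemma pd_eig:
  assumes "pd P" "x \<noteq> 0" "P *v x = l *s x"
  shows "Im l = 0 \<and> Re l > 0"
proof (rule real_ratio)
  show "cdot x (P *v x) = l * cdot x x" using assms(3) by (simp add: cdot_scale_right)
  show "Im (cdot x (P *v x)) = 0" using assms(1) herm_Im by (auto simp: pd_def)
  show "Re (cdot x (P *v x)) > 0" using assms(1,2) by (auto simp: pd_def)
qed (use cdot_self_pos[OF assms(2)] in auto)

lemma pd_eig2:
  assumes W: "pd W" and P: "pd P" and EP: "E ** P = mat 1" and PE: "P ** E = mat 1"
    and x: "x \<noteq> 0" and ev: "(W ** E) *v x = l *s x"
  shows "Im l = 0 \<and> Re l > 0"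
proof -
  define y where "y = E *v x"
  have xy: "x = P *v y" unfolding y_def by (simp add: matrix_vector_mul_assoc PE)
  have y0: "y \<noteq> 0" using x xy by auto
  have "W *v y = (W ** E) *v x" by (simp add: y_def matrix_vector_mul_assoc)
  then have Wy: "W *v y = l *s (P *v y)" using ev xy by simp
  show ?thesis
  proof (rule real_ratio)
    show "cdot y (W *v y) = l * cdot y (P *v y)" using Wy by (simp add: cdot_scale_right)
    show "Im (cdot y (W *v y)) = 0" using W herm_Im by (auto simp: pd_def)
    show "Re (cdot y (W *v y)) > 0" using W y0 by (auto simp: pd_def)
    show "Im (cdot y (P *v y)) = 0" using P herm_Im by (auto simp: pd_def)
    show "Re (cdot y (P *v y)) > 0" using P y0 by (auto simp: pd_def)
  qed
qed

lemma pd_det: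
  assumes "pd (P::complex^'n^'n)"
  shows "Im (det P) = 0 \<and> Re (det P) > 0"
  using eig_det_trace[of P] pd_eig[OF assms] by blast

lemma pd_form:
  fixes G :: "complex^'n^'k" and Si :: "complex^'k^'k"
  assumes "herm Si" "psd Si"
  shows "pd (mat 1 + hconj G ** Si ** G)"
  unfolding pd_def
proof (intro conjI allI impI)
  show "herm (mat 1 + hconj G ** Si ** G)"
    using assms(1) by (intro herm_add herm_mat1 herm_cong)
  fix x :: "complex^'n" assume x: "x \<noteq> 0"
  have "cdot x ((mat 1 + hconj G ** Si ** G) *v x) = cdot x x + cdot x ((hconj G ** Si ** G) *v x)"
    by (simp add: add_mulv cdot_add_right)
  moreover have "Re (cdot x ((hconj G ** Si ** G) *v x)) \<ge> 0"
    using psd_cong[OF assms(2), of G] by (simp add: psd_def)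
  ultimately show "Re (cdot x ((mat 1 + hconj G ** Si ** G) *v x)) > 0"
    using cdot_self_pos[OF x] by simp
qed

lemma woodbury:
  fixes G S :: "complex^'n^'n"
  assumes iS: "invertible S" and iR: "invertible (S + G ** hconj G)"
  shows "(mat 1 + hconj G ** matrix_inv S ** G) ** (mat 1 - hconj G ** matrix_inv (S + G ** hconj G) ** G) = mat 1"
proof -
  define R where "R = S + G ** hconj G"
  define Si where "Si = matrix_inv S"
  define Ri where "Ri = matrix_inv R"
  have GG: "G ** hconj G = R - S" unfolding R_def by simp
  have a1: "X ** R ** Ri = X" for X :: "complex^'n^'n"
    unfolding Ri_def R_def using inv_props[OF iR] by (simp add: matrix_mul_assoc[symmetric])
  have a2: "X ** Si ** S = X" for X :: "complex^'n^'n"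
    unfolding Si_def using inv_props[OF iS] by (simp add: matrix_mul_assoc[symmetric])
  have "hconj G ** Si ** G ** (hconj G ** Ri ** G) = hconj G ** Si ** (G ** hconj G) ** Ri ** G"
    by (simp add: matrix_mul_assoc)
  also have "\<dots> = hconj G ** Si ** R ** Ri ** G - hconj G ** Si ** S ** Ri ** G"
    by (simp add: GG mldist_diff mrdist_diff matrix_mul_assoc)
  also have "\<dots> = hconj G ** Si ** G - hconj G ** Ri ** G"
    by (simp add: a1 a2)
  finally have XY: "hconj G ** Si ** G ** (hconj G ** Ri ** G) = hconj G ** Si ** G - hconj G ** Ri ** G" .
  have "(mat 1 + hconj G ** Si ** G) ** (mat 1 - hconj G ** Ri ** G)
      = mat 1 - hconj G ** Ri ** G + hconj G ** Si ** G - hconj G ** Si ** G ** (hconj G ** Ri ** G)"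
    by (simp add: mrdist mldist_diff algebra_simps)
  also have "\<dots> = mat 1" by (simp add: XY)
  finally show ?thesis unfolding Si_def Ri_def R_def .
qed


definition Gm :: "complex^'m^'n \<Rightarrow> complex^'n^'m^'g \<Rightarrow> 'g \<Rightarrow> complex^'n^'n" where
  "Gm H V g = H ** (V $ g)"

definition SS :: "complex^'m^'n \<Rightarrow> real \<Rightarrow> 'g::finite \<Rightarrow> complex^'n^'m^'g \<Rightarrow> complex^'n^'n" where
  "SS H s gk V = (\<Sum>g\<in>UNIV - {gk}. Gm H V g ** hconj (Gm H V g)) + mat (complex_of_real s)"

definition RR :: "complex^'m^'n \<Rightarrow> real \<Rightarrow> complex^'n^'m^'g::finite \<Rightarrow> complex^'n^'n" where
  "RR H s V = (\<Sum>g\<in>UNIV. Gm H V g ** hconj (Gm H V g)) + mat (complex_of_real s)"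

lemma summand: "H ** V $ g ** hconj (V $ g) ** hconj H = Gm H V g ** hconj (Gm H V g)"
  by (simp add: Gm_def hconj_mult matrix_mul_assoc)

lemma Jmat_eq: "Jmat H s gk V = matrix_inv (SS H s gk V)"
  by (simp add: Jmat_def SS_def summand)

lemma RR_split: "RR H s V = SS H s gk V + Gm H V gk ** hconj (Gm H V gk)"
proof -
  have "(\<Sum>g\<in>UNIV. Gm H V g ** hconj (Gm H V g)) =
        Gm H V gk ** hconj (Gm H V gk) + (\<Sum>g\<in>UNIV - {gk}. Gm H V g ** hconj (Gm H V g))"
    by (rule sum.remove) auto
  then show ?thesis by (simp add: RR_def SS_def algebra_simps)
qed

lemma pd_shift:
  assumes "herm P" "psd P" "s > 0"
  shows "herm (P + mat (complex_of_real s))" "psd (P + mat (complex_of_real s))"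
    "invertible (P + mat (complex_of_real s))"
proof -
  show "herm (P + mat (complex_of_real s))" using assms by (intro herm_add herm_mat_real)
  show "psd (P + mat (complex_of_real s))" using assms by (intro psd_add psd_mat) auto
  show "invertible (P + mat (complex_of_real s))"
  proof (rule coercive_invertible[OF _ assms(3)])
    fix x
    have "cdot x ((P + mat (complex_of_real s)) *v x) = cdot x (P *v x) + of_real s * cdot x x"
      by (simp add: add_mulv mat_mulv cdot_add_right cdot_scale_right)
    then show "Re (cdot x ((P + mat (complex_of_real s)) *v x)) \<ge> s * Re (cdot x x)"
      using assms(2) by (simp add: psd_def)
  qed
qed

lemma SS_props:
  assumes "s > 0"
  shows "herm (SS H s gk V)" "psd (SS H s gk V)" "invertible (SS H s gk V)"
  unfolding SS_def using pd_shift[OF herm_sum[OF herm_gram] psd_sum[OF psd_gram] assms] by auto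

lemma RR_props:
  assumes "s > 0"
  shows "herm (RR H s V)" "psd (RR H s V)" "invertible (RR H s V)"
  unfolding RR_def using pd_shift[OF herm_sum[OF herm_gram] psd_sum[OF psd_gram] assms] by auto

lemma psd_of_pd: "pd A \<Longrightarrow> psd A"
  unfolding pd_def psd_def
proof (intro allI)
  fix x assume "herm A \<and> (\<forall>x. x \<noteq> 0 \<longrightarrow> 0 < Re (cdot x (A *v x)))"
  then show "0 \<le> Re (cdot x (A *v x))"
    by (cases "x = 0") (auto simp: cdot_def less_imp_le)
qed

lemma psd_trace_ge0: "psd T \<Longrightarrow> Re (trace T) \<ge> 0"
  using psd_trace[of T "mat 1"] by (simp add: hconj_mat)

lemma trace_R_ge0:
  assumes T: "psd T" and s: "s > 0"
  shows "Re (trace (T ** RR H s V)) \<ge> 0"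
proof -
  have "T ** RR H s V = (\<Sum>g\<in>UNIV. T ** (Gm H V g ** hconj (Gm H V g))) + s *\<^sub>R T"
    by (simp add: RR_def matrix_add_ldistrib msum_right mat_real_right)
  then have "Re (trace (T ** RR H s V)) = (\<Sum>g\<in>UNIV. Re (trace (T ** (Gm H V g ** hconj (Gm H V g))))) + s * Re (trace T)"
    by (simp add: trace_add trace_sum trace_scaleR Re_sum)
  moreover have "(\<Sum>g\<in>UNIV. Re (trace (T ** (Gm H V g ** hconj (Gm H V g))))) \<ge> 0"
    by (intro sum_nonneg psd_trace_gram[OF T])
  moreover have "s * Re (trace T) \<ge> 0" using psd_trace_ge0[OF T] s by simp
  ultimately show ?thesis by linarith
qed

lemma core:
  fixes H :: "complex^'m^'n" and V V0 :: "complex^'n^'m^'g::finite" and gk :: 'g and s :: real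
    and G G0 R R0 S S0 U Q E :: "complex^'n^'n"
  assumes s: "s > 0"
  assumes G_def: "G = Gm H V gk" and G0_def: "G0 = Gm H V0 gk" and R_def: "R = RR H s V"
    and R0_def: "R0 = RR H s V0"
    and S_def: "S = SS H s gk V" and S0_def: "S0 = SS H s gk V0"
    and U_def: "U = matrix_inv R0 ** G0" and Q_def: "Q = mat 1 - hconj U ** G0"
    and E_def: "E = mat 1 - hconj U ** G - hconj G ** U + hconj U ** R ** U"
  shows "Re (trace (matrix_inv Q ** E)) + ln (Re (det Q)) - real CARD('n)
           \<ge> - ln (Re (det (mat 1 + G ** hconj G ** matrix_inv S)))"
    and "V = V0 \<Longrightarrow> Re (trace (matrix_inv Q ** E)) + ln (Re (det Q)) - real CARD('n)
           = - ln (Re (det (mat 1 + G ** hconj G ** matrix_inv S)))"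
proof -
  define Si where "Si = matrix_inv S"
  define Ri where "Ri = matrix_inv R"
  define Si0 where "Si0 = matrix_inv S0"
  define Ri0 where "Ri0 = matrix_inv R0"
  have hS: "herm S" "psd S" "invertible S" unfolding S_def using SS_props[OF s] by auto
  have hR: "herm R" "psd R" "invertible R" unfolding R_def using RR_props[OF s] by auto
  have hS0: "herm S0" "psd S0" "invertible S0" unfolding S0_def using SS_props[OF s] by auto
  have hR0: "herm R0" "psd R0" "invertible R0" unfolding R0_def using RR_props[OF s] by auto
  have RS: "R = S + G ** hconj G" unfolding R_def S_def G_def by (rule RR_split)
  have RS0: "R0 = S0 + G0 ** hconj G0" unfolding R0_def S0_def G0_def by (rule RR_split)
  have hSi: "herm Si" "psd Si" unfolding Si_def using inv_herm psd_inv hS by auto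
  have hRi: "herm Ri" unfolding Ri_def using inv_herm hR by auto
  have hSi0: "herm Si0" "psd Si0" unfolding Si0_def using inv_herm psd_inv hS0 by auto
  have hRi0: "herm Ri0" unfolding Ri0_def using inv_herm hR0 by auto
  define P where "P = mat 1 + hconj G ** Si ** G"
  define P0 where "P0 = mat 1 + hconj G0 ** Si0 ** G0"
  define Es where "Es = mat 1 - hconj G ** Ri ** G"
  have Qe: "Q = mat 1 - hconj G0 ** Ri0 ** G0"
    unfolding Q_def U_def Ri0_def[symmetric] using hRi0
    by (simp add: hconj_mult herm_def matrix_mul_assoc)
  have P0Q: "P0 ** Q = mat 1"
    unfolding P0_def Qe Si0_def Ri0_def RS0 using woodbury[of S0 G0] hS0 hR0 RS0 by simp
  have QP0: "Q ** P0 = mat 1" using P0Q matrix_left_right_inverse by blast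
  have invQ: "matrix_inv Q = P0" using inv_unique(1)[OF QP0] .
  have PEs: "P ** Es = mat 1"
    unfolding P_def Es_def Si_def Ri_def RS using woodbury[of S G] hS hR RS by simp
  have EsP: "Es ** P = mat 1" using PEs matrix_left_right_inverse by blast
  have pdP: "pd P" unfolding P_def using pd_form[OF hSi] .
  have pdP0: "pd P0" unfolding P0_def using pd_form[OF hSi0] .
  have dP: "Im (det P) = 0" "Re (det P) > 0" using pd_det[OF pdP] by auto
  have dP0: "Im (det P0) = 0" "Re (det P0) > 0" using pd_det[OF pdP0] by auto
  have realdet: "Re (det X) = 1 / Re (det Y)" if "det Y * det X = 1" "Im (det Y) = 0" "Re (det Y) > 0"
    for X Y :: "complex^'n^'n"
  proof -
    have "det Y = of_real (Re (det Y))" using that(2) by (simp add: complex_eq_iff)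
    then have "det X = 1 / of_real (Re (det Y))" using that(1,3)
      by (metis nonzero_eq_divide_eq of_real_eq_0_iff less_irrefl mult.commute)
    also have "1 / complex_of_real (Re (det Y)) = complex_of_real (1 / Re (det Y))" by simp
    finally show ?thesis by simp
  qed
  have dQ: "Re (det Q) = 1 / Re (det P0)"
    using realdet[of P0 Q] P0Q dP0 by (simp add: det_mul[symmetric])
  have lnQ: "ln (Re (det Q)) = - ln (Re (det P0))" using dQ dP0 by (simp add: ln_div)
  have syl: "det (mat 1 + G ** hconj G ** Si) = det P"
    unfolding P_def using sylvester[of G "hconj G ** Si"] by (simp add: matrix_mul_assoc)
  define M where "M = P0 ** Es"
  have eigM: "Im (det M) = 0 \<and> Re (det M) > 0 \<and> ln (Re (det M)) \<le> Re (trace M) - real CARD('n)"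
    by (rule eig_det_trace) (use pd_eig2[OF pdP0 pdP EsP PEs] in \<open>auto simp: M_def\<close>)
  have dEs: "Re (det Es) = 1 / Re (det P)" using realdet[of P Es] PEs dP by (simp add: det_mul[symmetric])
  have dEsI: "Im (det Es) = 0"
  proof -
    have "det P * det Es = 1" using PEs by (simp add: det_mul[symmetric])
    moreover have "det P \<noteq> 0" using dP(2) by auto
    ultimately have "det Es = 1 / det P" by (simp add: eq_divide_eq mult.commute)
    moreover have "det P = of_real (Re (det P))" using dP(1) by (simp add: complex_eq_iff)
    ultimately show ?thesis by (metis Im_complex_of_real of_real_1 of_real_divide)
  qed
  have lnM: "ln (Re (det M)) = ln (Re (det P0)) - ln (Re (det P))"
  proof -
    have "Re (det M) = Re (det P0) * Re (det Es)" using dP0 dEsI by (simp add: M_def det_mul)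
    then show ?thesis using dEs dP dP0 by (simp add: ln_div ln_mult)
  qed
  define Z where "Z = U - Ri ** G"
  have hZ: "hconj Z = hconj U - hconj G ** Ri"
    using hRi by (simp add: Z_def hconj_diff hconj_mult herm_def)
  have a1: "X ** R ** Ri = X" for X :: "complex^'n^'n"
    unfolding Ri_def using inv_props[OF hR(3)] by (simp add: matrix_mul_assoc[symmetric])
  have a2: "X ** Ri ** R = X" for X :: "complex^'n^'n"
    unfolding Ri_def using inv_props[OF hR(3)] by (simp add: matrix_mul_assoc[symmetric])
  have ED: "E = Es + hconj Z ** R ** Z"
  proof -
    have "hconj Z ** R ** Z = hconj U ** R ** U - hconj U ** G - hconj G ** U + hconj G ** Ri ** G"
      unfolding hZ by (simp add: Z_def mldist_diff mrdist_diff matrix_mul_assoc a1 a2 algebra_simps)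
    then show ?thesis unfolding E_def Es_def by (simp add: algebra_simps)
  qed
  have trD: "Re (trace (P0 ** (hconj Z ** R ** Z))) \<ge> 0"
  proof -
    have "trace (P0 ** (hconj Z ** R ** Z)) = trace ((Z ** P0 ** hconj Z) ** R)"
      using trace_mul_sym[of "P0 ** (hconj Z ** R)" Z] by (simp add: matrix_mul_assoc)
    moreover have "psd (Z ** P0 ** hconj Z)"
      using psd_cong[OF psd_of_pd[OF pdP0], of "hconj Z"] by simp
    ultimately show ?thesis unfolding R_def using trace_R_ge0[OF _ s] by simp
  qed
  have trE: "Re (trace (matrix_inv Q ** E)) = Re (trace M) + Re (trace (P0 ** (hconj Z ** R ** Z)))"
    unfolding invQ ED M_def by (simp add: matrix_add_ldistrib trace_add)
  show "Re (trace (matrix_inv Q ** E)) + ln (Re (det Q)) - real CARD('n)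
           \<ge> - ln (Re (det (mat 1 + G ** hconj G ** matrix_inv S)))"
    using trE trD eigM lnM lnQ unfolding Si_def[symmetric] syl by linarith
  assume VV: "V = V0"
  have GG: "G = G0" "R = R0" "S = S0" unfolding G_def G0_def R_def R0_def S_def S0_def VV by auto
  have Z0: "Z = 0" unfolding Z_def U_def GG Ri_def by simp
  have trM: "trace (matrix_inv Q ** E) = of_nat CARD('n)"
  proof -
    have "Es = Q" unfolding Es_def Qe GG Ri_def Ri0_def ..
    then have "matrix_inv Q ** E = mat 1" unfolding invQ ED Z0 using P0Q by (simp add: PEs)
    then show ?thesis by (simp add: trace_I)
  qed
  have PP0: "P = P0" unfolding P_def P0_def GG Si_def Si0_def ..
  show "Re (trace (matrix_inv Q ** E)) + ln (Re (det Q)) - real CARD('n)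
           = - ln (Re (det (mat 1 + G ** hconj G ** matrix_inv S)))"
    using trM lnQ PP0 unfolding Si_def[symmetric] syl by simp
qed


lemma mscal_right: "(A::complex^'n^'m) ** (k *\<^sub>R B) = k *\<^sub>R (A ** B)"
  by (simp add: matrix_scalar_ac scalar_matrix_assoc)

lemma Umat_eq: "Umat H s gk V0 = matrix_inv (RR H s V0) ** Gm H V0 gk"
  by (simp add: Umat_def RR_def summand Gm_def matrix_mul_assoc)

lemma Qmat_eq: "Qmat H s gk V0 = mat 1 - hconj (Umat H s gk V0) ** Gm H V0 gk"
  by (simp add: Qmat_def Gm_def matrix_mul_assoc)

lemma Q_herm_inv:
  fixes H :: "complex^'m^'n" and V0 :: "complex^'n^'m^'g::finite" and gk :: 'g
  assumes s: "s > 0"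
  shows "herm (matrix_inv (Qmat H s gk V0))"
proof -
  let ?G0 = "Gm H V0 gk" and ?R0 = "RR H s V0" and ?S0 = "SS H s gk V0"
  have hR0: "herm ?R0" "invertible ?R0" using RR_props[OF s] by blast+
  have hS0: "invertible ?S0" using SS_props(3)[OF s] by blast
  have hRi0: "herm (matrix_inv ?R0)" using inv_herm hR0 by auto
  have Qe: "Qmat H s gk V0 = mat 1 - hconj ?G0 ** matrix_inv ?R0 ** ?G0"
    using hRi0 by (simp add: Qmat_eq Umat_eq hconj_mult herm_def matrix_mul_assoc)
  have RS0: "?R0 = ?S0 + ?G0 ** hconj ?G0" by (rule RR_split)
  have "(mat 1 + hconj ?G0 ** matrix_inv ?S0 ** ?G0) ** Qmat H s gk V0 = mat 1"
    unfolding Qe using woodbury[of ?S0 ?G0] hS0 hR0 RS0 by simp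
  then have QP: "Qmat H s gk V0 ** (mat 1 + hconj ?G0 ** matrix_inv ?S0 ** ?G0) = mat 1"
    using matrix_left_right_inverse by blast
  have "herm (Qmat H s gk V0)" unfolding Qe
    using hRi0 unfolding herm_def by (simp add: hconj_diff hconj_mat hconj_mult matrix_mul_assoc)
  then show ?thesis using inv_herm inv_unique(2)[OF QP] by blast
qed

lemma fsur_eq:
  fixes H :: "complex^'m^'n" and V V0 :: "complex^'n^'m^'g::finite" and gk :: 'g
  assumes s: "s > 0"
  defines "U \<equiv> Umat H s gk V0"
  shows "fsur H s F gk C0 eta0 V0 C eta V =
    Re (trace (matrix_inv (Qmat H s gk V0) **
       (mat 1 - hconj U ** Gm H V gk - hconj (Gm H V gk) ** U + hconj U ** RR H s V ** U)))
    + ln (Re (det (Qmat H s gk V0))) - real CARD('n)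
    + ((eta^2 + C^2) / 2 + F * eta - (eta0 + C0) * (eta + C) + (eta0 + C0)^2 / 2)"
proof -
  define W where "W = matrix_inv (Qmat H s gk V0)"
  define Y where "Y g = hconj U ** Gm H V g" for g
  have hW: "herm W" unfolding W_def using Q_herm_inv[OF s] .
  have t1: "Re (trace (hconj (V $ g) ** Amat H s gk V0 ** (V $ g))) = Re (trace (W ** (Y g ** hconj (Y g))))" for g
  proof -
    have "hconj (V $ g) ** Amat H s gk V0 ** (V $ g) = hconj (Y g) ** W ** Y g"
      by (simp add: Amat_def Y_def U_def W_def Gm_def hconj_mult matrix_mul_assoc)
    then show ?thesis
      using trace_mul_sym[of "hconj (Y g) ** W" "Y g"] trace_mul_sym[of "Y g ** hconj (Y g)" W]
      by (simp add: matrix_mul_assoc)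
  qed
  have t2: "trace (Bmat H s gk V0 ** (V $ gk)) = - trace (W ** Y gk)"
    by (simp add: Bmat_def Y_def U_def W_def Gm_def muminus_left trace_uminus matrix_mul_assoc)
  have t3: "Re (trace (W ** hconj (Y gk))) = Re (trace (W ** Y gk))"
  proof -
    have "trace (W ** hconj (Y gk)) = trace (hconj (Y gk) ** hconj W)"
      using hW trace_mul_sym[of W "hconj (Y gk)"] by (simp add: herm_def)
    also have "\<dots> = cnj (trace (W ** Y gk))" by (simp add: hconj_mult[symmetric] trace_hconj)
    finally show ?thesis by simp
  qed
  have URU: "hconj U ** RR H s V ** U = (\<Sum>g\<in>UNIV. Y g ** hconj (Y g)) + s *\<^sub>R (hconj U ** U)"
    by (simp add: RR_def Y_def matrix_add_ldistrib mrdist msum_left msum_right mat_real_right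
        mat_real_left hconj_mult matrix_mul_assoc scalar_matrix_assoc[symmetric] mscal_right)
  have EE: "mat 1 - hconj U ** Gm H V gk - hconj (Gm H V gk) ** U + hconj U ** RR H s V ** U
      = mat 1 - Y gk - hconj (Y gk) + ((\<Sum>g\<in>UNIV. Y g ** hconj (Y g)) + s *\<^sub>R (hconj U ** U))"
    unfolding URU by (simp add: Y_def hconj_mult)
  have trE: "Re (trace (W ** (mat 1 - hconj U ** Gm H V gk - hconj (Gm H V gk) ** U + hconj U ** RR H s V ** U)))
     = Re (trace W) - 2 * Re (trace (W ** Y gk)) + (\<Sum>g\<in>UNIV. Re (trace (W ** (Y g ** hconj (Y g)))))
       + s * Re (trace (W ** (hconj U ** U)))"
    unfolding EE using t3
    by (simp add: matrix_add_ldistrib mldist_diff trace_add trace_sub trace_sum msum_right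
        mscal_right trace_scaleR Re_sum)
  have trb: "Re (trace (W ** (mat 1 + mat (complex_of_real s) ** (hconj U ** U))))
      = Re (trace W) + s * Re (trace (W ** (hconj U ** U)))"
    by (simp add: mat_real_left matrix_add_ldistrib trace_add mscal_right trace_scaleR)
  show ?thesis
    unfolding fsur_def bconst_def W_def[symmetric] U_def[symmetric]
    using trE trb t1 t2 by (simp add: algebra_simps)
qed

lemma rhs_eq:
  "rhs H s F gk C eta V = (F - C) * eta
     - ln (Re (det (mat 1 + Gm H V gk ** hconj (Gm H V gk) ** matrix_inv (SS H s gk V))))"
  by (simp add: rhs_def Jmat_eq summand)


abbreviation dd :: "(real \<Rightarrow> 'a::real_normed_vector) \<Rightarrow> bool" where
  "dd f \<equiv> f differentiable (at (0::real))"

definition dm :: "(real \<Rightarrow> complex^'c^'r) \<Rightarrow> bool" where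
  "dm F \<longleftrightarrow> (\<forall>i j. dd (\<lambda>s. F s $ i $ j))"

lemma dd_prod: "finite X \<Longrightarrow> (\<And>a. a \<in> X \<Longrightarrow> dd (f a)) \<Longrightarrow> dd (\<lambda>s. \<Prod>a\<in>X. (f a s :: complex))"
proof (induction X rule: finite_induct)
  case empty then show ?case by (simp add: differentiable_const)
next
  case (insert a F) then show ?case by (simp add: differentiable_mult)
qed

lemma dd_sum: "finite X \<Longrightarrow> (\<And>a. a \<in> X \<Longrightarrow> dd (f a)) \<Longrightarrow> dd (\<lambda>s. \<Sum>a\<in>X. (f a s :: 'a::real_normed_vector))"
  by (rule differentiable_sum) auto

lemma dd_cnj: "dd f \<Longrightarrow> dd (\<lambda>s. cnj (f s))"
  by (rule differentiable_compose[of cnj, OF bounded_linear_imp_differentiable[OF bounded_linear_cnj]])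

lemma dd_Re: "dd f \<Longrightarrow> dd (\<lambda>s. Re (f s))"
  by (rule differentiable_compose[of Re, OF bounded_linear_imp_differentiable[OF bounded_linear_Re]])

lemma dd_of_real: "dd (\<lambda>s. complex_of_real s)"
  by (rule bounded_linear_imp_differentiable[OF bounded_linear_of_real])

lemma dm_const: "dm (\<lambda>s. A)"
  by (simp add: dm_def differentiable_const)

lemma dm_add: "dm F \<Longrightarrow> dm G \<Longrightarrow> dm (\<lambda>s. F s + G s)"
  by (simp add: dm_def differentiable_add)

lemma dm_diff: "dm F \<Longrightarrow> dm G \<Longrightarrow> dm (\<lambda>s. F s - G s)"
  by (simp add: dm_def differentiable_diff)

lemma dm_uminus: "dm F \<Longrightarrow> dm (\<lambda>s. - F s)"
  by (simp add: dm_def differentiable_minus)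

lemma dm_mult: "dm F \<Longrightarrow> dm G \<Longrightarrow> dm (\<lambda>s. F s ** G s)"
  unfolding dm_def matrix_matrix_mult_def
  by (auto intro!: dd_sum differentiable_mult)

lemma dm_hconj: "dm F \<Longrightarrow> dm (\<lambda>s. hconj (F s))"
  by (simp add: dm_def dd_cnj)

lemma dm_sum: "finite X \<Longrightarrow> (\<And>a. a \<in> X \<Longrightarrow> dm (F a)) \<Longrightarrow> dm (\<lambda>s. \<Sum>a\<in>X. F a s)"
  unfolding dm_def by (auto simp: sum_component intro!: dd_sum)

lemma dd_det: "dm F \<Longrightarrow> dd (\<lambda>s. det (F s :: complex^'n^'n))"
  unfolding Determinants.det_def dm_def
  by (auto intro!: dd_sum dd_prod differentiable_mult differentiable_const finite_permutations)

lemma dd_trace: "dm F \<Longrightarrow> dd (\<lambda>s. trace (F s :: complex^'n^'n))"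
  unfolding trace_def dm_def by (auto intro!: dd_sum)

lemma fsur_ineq:
  fixes H :: "complex^'m^'n" and V V0 :: "complex^'n^'m^'g::finite" and gk :: 'g
  assumes s: "s > 0"
  shows "fsur H s F gk C0 eta0 V0 C eta V \<ge> rhs H s F gk C eta V"
proof -
  let ?U = "Umat H s gk V0"
  have c: "Re (trace (matrix_inv (Qmat H s gk V0) **
       (mat 1 - hconj ?U ** Gm H V gk - hconj (Gm H V gk) ** ?U + hconj ?U ** RR H s V ** ?U)))
    + ln (Re (det (Qmat H s gk V0))) - real CARD('n)
    \<ge> - ln (Re (det (mat 1 + Gm H V gk ** hconj (Gm H V gk) ** matrix_inv (SS H s gk V))))"
    by (rule core(1)[OF s refl refl refl refl refl refl Umat_eq Qmat_eq refl])
  have q: "(eta^2 + C^2) / 2 + F * eta - (eta0 + C0) * (eta + C) + (eta0 + C0)^2 / 2 \<ge> (F - C) * eta"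
  proof -
    have "(eta^2 + C^2) / 2 + F * eta - (eta0 + C0) * (eta + C) + (eta0 + C0)^2 / 2 - (F - C) * eta
        = ((eta + C) - (eta0 + C0))^2 / 2" by (simp add: power2_eq_square field_simps)
    then show ?thesis by (smt (verit) zero_le_power2 divide_nonneg_pos)
  qed
  show ?thesis unfolding fsur_eq[OF s] rhs_eq using c q by linarith
qed

lemma fsur_eq_pt:
  fixes H :: "complex^'m^'n" and V0 :: "complex^'n^'m^'g::finite" and gk :: 'g
  assumes s: "s > 0"
  shows "fsur H s F gk C0 eta0 V0 C0 eta0 V0 = rhs H s F gk C0 eta0 V0"
proof -
  let ?U = "Umat H s gk V0"
  have c: "Re (trace (matrix_inv (Qmat H s gk V0) **
       (mat 1 - hconj ?U ** Gm H V0 gk - hconj (Gm H V0 gk) ** ?U + hconj ?U ** RR H s V0 ** ?U)))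
    + ln (Re (det (Qmat H s gk V0))) - real CARD('n)
    = - ln (Re (det (mat 1 + Gm H V0 gk ** hconj (Gm H V0 gk) ** matrix_inv (SS H s gk V0))))"
    by (rule core(2)[OF s refl refl refl refl refl refl Umat_eq Qmat_eq refl refl])
  have q: "(eta0^2 + C0^2) / 2 + F * eta0 - (eta0 + C0) * (eta0 + C0) + (eta0 + C0)^2 / 2 = (F - C0) * eta0"
    by (simp add: power2_eq_square field_simps)
  show ?thesis unfolding fsur_eq[OF s] rhs_eq using c q by linarith
qed

lemma rhs_eq2:
  fixes H :: "complex^'m^'n" and V :: "complex^'n^'m^'g::finite" and gk :: 'g
  assumes s: "s > 0"
  shows "rhs H s F gk C eta V = (F - C) * eta - ln (Re (det (RR H s V) / det (SS H s gk V)))"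
    and "Re (det (RR H s V) / det (SS H s gk V)) > 0" and "det (SS H s gk V) \<noteq> 0"
proof -
  let ?G = "Gm H V gk" and ?S = "SS H s gk V" and ?R = "RR H s V"
  have hS: "herm ?S" "psd ?S" "invertible ?S" using SS_props[OF s] by blast+
  have inv: "?S ** matrix_inv ?S = mat 1" "matrix_inv ?S ** ?S = mat 1" using inv_props[OF hS(3)] by auto
  have m: "mat 1 + ?G ** hconj ?G ** matrix_inv ?S = ?R ** matrix_inv ?S"
    unfolding RR_split[of H s V gk] by (simp add: mrdist inv)
  have dS: "det ?S * det (matrix_inv ?S) = 1" using inv by (simp add: det_mul[symmetric])
  have dS0: "det ?S \<noteq> 0" using dS by auto
  then show "det ?S \<noteq> 0" .
  have dSi: "det (matrix_inv ?S) = 1 / det ?S" using dS dS0 by (simp add: eq_divide_eq mult.commute)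
  from m dSi have e: "det (mat 1 + ?G ** hconj ?G ** matrix_inv ?S) = det ?R / det ?S"
    by (simp add: det_mul)
  then show "rhs H s F gk C eta V = (F - C) * eta - ln (Re (det ?R / det ?S))"
    by (simp add: rhs_eq)
  have hSi: "herm (matrix_inv ?S)" "psd (matrix_inv ?S)" using inv_herm psd_inv hS by auto
  have "det (mat 1 + ?G ** hconj ?G ** matrix_inv ?S) = det (mat 1 + hconj ?G ** matrix_inv ?S ** ?G)"
    using sylvester[of ?G "hconj ?G ** matrix_inv ?S"] by (simp add: matrix_mul_assoc)
  then show "Re (det ?R / det ?S) > 0" using pd_det[OF pd_form[OF hSi, of ?G]] e by simp
qed

lemma dm_V: "(\<And>h. dm (\<lambda>s. V s $ h)) \<Longrightarrow> dm (\<lambda>s. Gm H (V s) g)"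
  unfolding Gm_def by (intro dm_mult dm_const) auto

lemma dm_RR: "(\<And>h. dm (\<lambda>s. V s $ h)) \<Longrightarrow> dm (\<lambda>s. RR H s2 (V s))"
  unfolding RR_def by (intro dm_add dm_sum dm_mult dm_hconj dm_V dm_const) auto

lemma dm_SS: "(\<And>h. dm (\<lambda>s. V s $ h)) \<Longrightarrow> dm (\<lambda>s. SS H s2 gk (V s))"
  unfolding SS_def by (intro dm_add dm_sum dm_mult dm_hconj dm_V dm_const) auto

lemma fsur_dd:
  assumes V: "\<And>h. dm (\<lambda>s. V s $ h)" and C: "dd C" and e: "dd eta"
  shows "dd (\<lambda>s. fsur H s2 F gk C0 eta0 V0 (C s) (eta s) (V s))"
  unfolding fsur_def power2_eq_square
  by (intro differentiable_add differentiable_diff differentiable_mult differentiable_const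
       differentiable_divide dd_sum dd_Re dd_trace dm_mult dm_hconj dm_const V C e) auto

lemma rhs_dd:
  fixes H :: "complex^'m^'n" and V :: "real \<Rightarrow> complex^'n^'m^'g::finite" and gk :: 'g
  assumes s: "s2 > 0" and V: "\<And>h. dm (\<lambda>s. V s $ h)" and C: "dd C" and e: "dd eta"
  shows "dd (\<lambda>s. rhs H s2 F gk (C s) (eta s) (V s))"
proof -
  have pos: "Re (det (RR H s2 (V 0)) / det (SS H s2 gk (V 0))) > 0" using rhs_eq2(2)[OF s] .
  have ln: "ln differentiable at (Re (det (RR H s2 (V 0)) / det (SS H s2 gk (V 0))))"
    using DERIV_ln[OF pos] real_differentiable_def by blast
  have "dd (\<lambda>s. (F - C s) * eta s - ln (Re (det (RR H s2 (V s)) / det (SS H s2 gk (V s)))))"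
    by (intro differentiable_diff differentiable_mult differentiable_const C e
        differentiable_compose[where f=ln and g="\<lambda>s. Re (det (RR H s2 (V s)) / det (SS H s2 gk (V s)))" and x=0, OF ln] dd_Re differentiable_divide dd_det dm_RR dm_SS V
        rhs_eq2(3)[OF s])
  then show ?thesis by (simp add: rhs_eq2(1)[OF s])
qed

lemma dm_Eunit:
  assumes "dd c"
  shows "dm (\<lambda>s. (V0 + Eunit g i j (c s)) $ h)"
  unfolding dm_def Eunit_def
proof (intro allI)
  fix a b
  show "dd (\<lambda>s. (V0 + (\<chi> h a b. if h = g \<and> a = i \<and> b = j then c s else 0)) $ h $ a $ b)"
    by (cases "h = g \<and> a = i \<and> b = j") (use assms in \<open>auto intro!: differentiable_add differentiable_const\<close>)
qed

lemma deriv_match: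
  fixes f r :: "real \<Rightarrow> real"
  assumes "dd f" "dd r" "\<And>t. f t \<ge> r t" "f 0 = r 0"
  shows "\<exists>D. (f has_real_derivative D) (at 0) \<and> (r has_real_derivative D) (at 0)"
proof -
  obtain Df where Df: "(f has_real_derivative Df) (at 0)" using assms(1) real_differentiable_def by blast
  obtain Dr where Dr: "(r has_real_derivative Dr) (at 0)" using assms(2) real_differentiable_def by blast
  have "((\<lambda>t. f t - r t) has_real_derivative Df - Dr) (at 0)" by (rule DERIV_diff[OF Df Dr])
  then have "Df - Dr = 0"
    by (rule DERIV_local_min[of _ _ _ 1]) (use assms(3,4) in auto)
  then show ?thesis using Df Dr by auto
qed


lemma convex_quad:
  fixes B :: "'a::real_vector \<Rightarrow> 'a \<Rightarrow> real"
  assumes B: "bilinear B" and l: "linear l" and pos: "\<And>z. B z z \<ge> 0"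
  shows "convex_on UNIV (\<lambda>x. B x x + l x + c)"
proof (rule convex_onI)
  fix t :: real and x y :: 'a
  assume t: "t > 0" "t < 1"
  define u where "u = 1 - t"
  have e1: "B (u *\<^sub>R x + t *\<^sub>R y) (u *\<^sub>R x + t *\<^sub>R y)
     = u * u * B x x + u * t * (B x y + B y x) + t * t * B y y"
    by (simp add: bilinear_ladd[OF B] bilinear_radd[OF B] bilinear_lmul[OF B] bilinear_rmul[OF B] algebra_simps)
  have e2: "B (x - y) (x - y) = B x x - B x y - B y x + B y y"
    by (simp add: bilinear_lsub[OF B] bilinear_rsub[OF B])
  have e3: "l (u *\<^sub>R x + t *\<^sub>R y) = u * l x + t * l y"
    using l by (simp add: linear_add linear_scale)
  have "u * t * B (x - y) (x - y) \<ge> 0" using pos[of "x - y"] t by (simp add: u_def)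
  then have "B (u *\<^sub>R x + t *\<^sub>R y) (u *\<^sub>R x + t *\<^sub>R y) + l (u *\<^sub>R x + t *\<^sub>R y) + c
      \<le> u * (B x x + l x + c) + t * (B y y + l y + c)"
    unfolding e1 e3 e2 by (simp add: u_def algebra_simps)
  then show "B ((1 - t) *\<^sub>R x + t *\<^sub>R y) ((1 - t) *\<^sub>R x + t *\<^sub>R y) + l ((1 - t) *\<^sub>R x + t *\<^sub>R y) + c
      \<le> (1 - t) * (B x x + l x + c) + t * (B y y + l y + c)"
    by (simp only: u_def)
qed simp

definition Bq :: "complex^'m^'m \<Rightarrow> real \<times> real \<times> (complex^'n^'m^'g::finite) \<Rightarrow> real \<times> real \<times> (complex^'n^'m^'g) \<Rightarrow> real" where
  "Bq A x y = (\<Sum>g\<in>UNIV. Re (trace (hconj (snd (snd x) $ g) ** A ** (snd (snd y) $ g))))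
      + (fst (snd x) * fst (snd y) + fst x * fst y) / 2"

definition lq :: "complex^'m^'n \<Rightarrow> real \<Rightarrow> real \<Rightarrow> 'g \<Rightarrow> real \<times> real \<times> (complex^'n^'m^'g::finite) \<Rightarrow> real" where
  "lq Bm F k gk x = 2 * Re (trace (Bm ** (snd (snd x) $ gk))) + F * fst (snd x) - k * (fst (snd x) + fst x)"

lemma Re_scaleR_c: "Re (r *\<^sub>R z) = r * Re z" by simp

lemma bilinear_Bq:
  fixes A :: "complex^'m^'m"
  shows "bilinear (Bq A :: real \<times> real \<times> (complex^'n^'m^'g::finite) \<Rightarrow> _)"
  unfolding bilinear_def
proof (intro conjI allI)
  fix x :: "real \<times> real \<times> (complex^'n^'m^'g)"
  show "linear (Bq A x)"
    apply (rule linearI)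
     apply (simp_all add: Bq_def matrix_add_ldistrib trace_add Re_sum sum.distrib algebra_simps mscal_right
        trace_scaleR scaleR_sum_right sum_distrib_left)
    apply (simp add: field_simps)
    done
next
  fix y :: "real \<times> real \<times> (complex^'n^'m^'g)"
  show "linear (\<lambda>x. Bq A x y)"
    apply (rule linearI)
     apply (simp_all add: Bq_def hconj_add mrdist trace_add Re_sum sum.distrib algebra_simps hconj_scaleR
        scalar_matrix_assoc[symmetric] trace_scaleR scaleR_sum_right sum_distrib_left)
    apply (simp add: field_simps)
    done
qed

lemma linear_lq: "linear (lq Bm F k gk)"
  by (rule linearI) (simp_all add: lq_def matrix_add_ldistrib trace_add mscal_right trace_scaleR algebra_simps)

lemma Bq_pos:
  assumes "psd A"
  shows "Bq A z z \<ge> 0"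
proof -
  have "(\<Sum>g\<in>UNIV. Re (trace (hconj (snd (snd z) $ g) ** A ** (snd (snd z) $ g)))) \<ge> 0"
    by (intro sum_nonneg psd_trace[OF assms])
  moreover have "(fst (snd z) * fst (snd z) + fst z * fst z) / 2 \<ge> 0" by simp
  ultimately show ?thesis unfolding Bq_def by linarith
qed


lemma Q_inv_psd:
  fixes H :: "complex^'m^'n" and V0 :: "complex^'n^'m^'g::finite" and gk :: 'g
  assumes s: "s > 0"
  shows "psd (matrix_inv (Qmat H s gk V0))"
proof -
  let ?G0 = "Gm H V0 gk" and ?R0 = "RR H s V0" and ?S0 = "SS H s gk V0"
  have hR0: "herm ?R0" "invertible ?R0" using RR_props[OF s] by blast+
  have hS0: "herm ?S0" "psd ?S0" "invertible ?S0" using SS_props[OF s] by blast+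
  have hRi0: "herm (matrix_inv ?R0)" using inv_herm hR0 by auto
  have hSi0: "herm (matrix_inv ?S0)" "psd (matrix_inv ?S0)" using inv_herm psd_inv hS0 by auto
  have Qe: "Qmat H s gk V0 = mat 1 - hconj ?G0 ** matrix_inv ?R0 ** ?G0"
    using hRi0 by (simp add: Qmat_eq Umat_eq hconj_mult herm_def matrix_mul_assoc)
  have RS0: "?R0 = ?S0 + ?G0 ** hconj ?G0" by (rule RR_split)
  have "(mat 1 + hconj ?G0 ** matrix_inv ?S0 ** ?G0) ** Qmat H s gk V0 = mat 1"
    unfolding Qe using woodbury[of ?S0 ?G0] hS0 hR0 RS0 by simp
  then have QP: "Qmat H s gk V0 ** (mat 1 + hconj ?G0 ** matrix_inv ?S0 ** ?G0) = mat 1"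
    using matrix_left_right_inverse by blast
  have "matrix_inv (Qmat H s gk V0) = mat 1 + hconj ?G0 ** matrix_inv ?S0 ** ?G0"
    using inv_unique(1)[OF QP] .
  then show ?thesis using psd_of_pd[OF pd_form[OF hSi0, of ?G0]] by simp
qed

lemma Amat_psd:
  fixes H :: "complex^'m^'n" and V0 :: "complex^'n^'m^'g::finite" and gk :: 'g
  assumes s: "s > 0"
  shows "psd (Amat H s gk V0)"
proof -
  have "Amat H s gk V0 = hconj (hconj (Umat H s gk V0) ** H) ** matrix_inv (Qmat H s gk V0) ** (hconj (Umat H s gk V0) ** H)"
    by (simp add: Amat_def hconj_mult matrix_mul_assoc)
  then show ?thesis using psd_cong[OF Q_inv_psd[OF s]] by simp
qed

lemma fsur_quad:
  fixes H :: "complex^'m^'n" and V0 :: "complex^'n^'m^'g::finite" and gk :: 'g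
  shows "(\<lambda>(C, eta, V). fsur H s F gk C0 eta0 V0 C eta V)
    = (\<lambda>x. Bq (Amat H s gk V0) x x + lq (Bmat H s gk V0) F (eta0 + C0) gk x + bconst H s gk C0 eta0 V0)"
  by (auto simp: fun_eq_iff fsur_def Bq_def lq_def power2_eq_square algebra_simps)

lemma Eunit_zero: "Eunit g i j 0 = 0"
  by (simp add: Eunit_def veq)

theorem proposition1:
  fixes H :: "'k \<Rightarrow> 't \<Rightarrow> complex^'m^'n"
    and sig2 :: "'k \<Rightarrow> real"
    and F :: "'g::finite \<Rightarrow> real"
    and gof :: "'k \<Rightarrow> 'g"
    and k :: 'k and t :: 't
    and C0 eta0 :: real
    and V0 :: "complex^'n^'m^'g"
  assumes MN: "CARD('n) < CARD('m)"
    and noise: "\<forall>k. sig2 k > 0"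
    and files: "\<forall>g. F g > 0"
  shows
   "(\<forall>C eta V. fsur (H k t) (sig2 k) (F (gof k)) (gof k) C0 eta0 V0 C eta V
                \<ge> rhs (H k t) (sig2 k) (F (gof k)) (gof k) C eta V)
  \<and> fsur (H k t) (sig2 k) (F (gof k)) (gof k) C0 eta0 V0 C0 eta0 V0
      = rhs (H k t) (sig2 k) (F (gof k)) (gof k) C0 eta0 V0
  \<and> (\<exists>D. ((\<lambda>s. fsur (H k t) (sig2 k) (F (gof k)) (gof k) C0 eta0 V0 (C0 + s) eta0 V0)
              has_real_derivative D) (at 0)
        \<and> ((\<lambda>s. rhs (H k t) (sig2 k) (F (gof k)) (gof k) (C0 + s) eta0 V0)
              has_real_derivative D) (at 0))
  \<and> (\<exists>D. ((\<lambda>s. fsur (H k t) (sig2 k) (F (gof k)) (gof k) C0 eta0 V0 C0 (eta0 + s) V0)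
              has_real_derivative D) (at 0)
        \<and> ((\<lambda>s. rhs (H k t) (sig2 k) (F (gof k)) (gof k) C0 (eta0 + s) V0)
              has_real_derivative D) (at 0))
  \<and> (\<forall>g i j. \<exists>D.
        ((\<lambda>s. fsur (H k t) (sig2 k) (F (gof k)) (gof k) C0 eta0 V0 C0 eta0
                 (V0 + Eunit g i j (complex_of_real s))) has_real_derivative D) (at 0)
      \<and> ((\<lambda>s. rhs (H k t) (sig2 k) (F (gof k)) (gof k) C0 eta0
                 (V0 + Eunit g i j (complex_of_real s))) has_real_derivative D) (at 0))
  \<and> (\<forall>g i j. \<exists>D.
        ((\<lambda>s. fsur (H k t) (sig2 k) (F (gof k)) (gof k) C0 eta0 V0 C0 eta0
                 (V0 + Eunit g i j (\<i> * complex_of_real s))) has_real_derivative D) (at 0)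
      \<and> ((\<lambda>s. rhs (H k t) (sig2 k) (F (gof k)) (gof k) C0 eta0
                 (V0 + Eunit g i j (\<i> * complex_of_real s))) has_real_derivative D) (at 0))
  \<and> convex_on UNIV (\<lambda>(C, eta, V). fsur (H k t) (sig2 k) (F (gof k)) (gof k) C0 eta0 V0 C eta V)
  \<and> quadratic_fun (\<lambda>(C, eta, V). fsur (H k t) (sig2 k) (F (gof k)) (gof k) C0 eta0 V0 C eta V)"
proof -
  let ?H = "H k t" and ?s = "sig2 k" and ?F = "F (gof k)" and ?gk = "gof k"
  have s: "?s > 0" using noise by blast
  have ineq: "\<And>C eta V. fsur ?H ?s ?F ?gk C0 eta0 V0 C eta V \<ge> rhs ?H ?s ?F ?gk C eta V"
    by (rule fsur_ineq[OF s])
  have eq: "fsur ?H ?s ?F ?gk C0 eta0 V0 C0 eta0 V0 = rhs ?H ?s ?F ?gk C0 eta0 V0"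
    by (rule fsur_eq_pt[OF s])
  have dV0: "\<And>h. dm (\<lambda>s::real. V0 $ h)" by (rule dm_const)
  have dconst: "dd (\<lambda>s::real. c)" for c :: real by (rule differentiable_const)
  have dshift: "dd (\<lambda>s::real. c + s)" for c :: real
    by (intro differentiable_add differentiable_const differentiable_ident)
  have dC: "\<exists>D. ((\<lambda>s. fsur ?H ?s ?F ?gk C0 eta0 V0 (C0 + s) eta0 V0) has_real_derivative D) (at 0)
        \<and> ((\<lambda>s. rhs ?H ?s ?F ?gk (C0 + s) eta0 V0) has_real_derivative D) (at 0)"
    by (rule deriv_match[OF fsur_dd[OF dV0 dshift dconst] rhs_dd[OF s dV0 dshift dconst]])
       (use ineq eq in auto)
  have dE: "\<exists>D. ((\<lambda>s. fsur ?H ?s ?F ?gk C0 eta0 V0 C0 (eta0 + s) V0) has_real_derivative D) (at 0)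
        \<and> ((\<lambda>s. rhs ?H ?s ?F ?gk C0 (eta0 + s) V0) has_real_derivative D) (at 0)"
    by (rule deriv_match[OF fsur_dd[OF dV0 dconst dshift] rhs_dd[OF s dV0 dconst dshift]])
       (use ineq eq in auto)
  have dRe: "\<exists>D. ((\<lambda>s. fsur ?H ?s ?F ?gk C0 eta0 V0 C0 eta0
                 (V0 + Eunit g i j (complex_of_real s))) has_real_derivative D) (at 0)
      \<and> ((\<lambda>s. rhs ?H ?s ?F ?gk C0 eta0
                 (V0 + Eunit g i j (complex_of_real s))) has_real_derivative D) (at 0)" for g i j
  proof -
    have dV: "\<And>h. dm (\<lambda>s. (V0 + Eunit g i j (complex_of_real s)) $ h)"
      by (rule dm_Eunit[OF dd_of_real])
    show ?thesis
      by (rule deriv_match[OF fsur_dd[OF dV dconst dconst] rhs_dd[OF s dV dconst dconst]])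
         (use ineq eq in \<open>auto simp: Eunit_zero\<close>)
  qed
  have dIm: "\<exists>D. ((\<lambda>s. fsur ?H ?s ?F ?gk C0 eta0 V0 C0 eta0
                 (V0 + Eunit g i j (\<i> * complex_of_real s))) has_real_derivative D) (at 0)
      \<and> ((\<lambda>s. rhs ?H ?s ?F ?gk C0 eta0
                 (V0 + Eunit g i j (\<i> * complex_of_real s))) has_real_derivative D) (at 0)" for g i j
  proof -
    have dc: "dd (\<lambda>s. \<i> * complex_of_real s)"
      by (intro differentiable_mult differentiable_const dd_of_real)
    have dV: "\<And>h. dm (\<lambda>s. (V0 + Eunit g i j (\<i> * complex_of_real s)) $ h)"
      by (rule dm_Eunit[OF dc])
    show ?thesis
      by (rule deriv_match[OF fsur_dd[OF dV dconst dconst] rhs_dd[OF s dV dconst dconst]])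
         (use ineq eq in \<open>auto simp: Eunit_zero\<close>)
  qed
  have cvx: "convex_on UNIV (\<lambda>(C, eta, V). fsur ?H ?s ?F ?gk C0 eta0 V0 C eta V)"
    unfolding fsur_quad
    by (rule convex_quad[OF bilinear_Bq linear_lq Bq_pos[OF Amat_psd[OF s]]])
  have qf: "quadratic_fun (\<lambda>(C, eta, V). fsur ?H ?s ?F ?gk C0 eta0 V0 C eta V)"
    unfolding fsur_quad quadratic_fun_def using bilinear_Bq linear_lq by blast
  show ?thesis using ineq eq dC dE dRe dIm cvx qf by blast
qed


end
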